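(* Let $(X,G)$ be topologically transitive and $X_0$ a dense $G$-invariant subset of $X_t$. Then $Q_0\subseteq S^{eq}_0$, and consequently $S^\ast_0\subseteq S^{eq}_0$.
   Context: $G$ is a group acting by homeomorphisms $x\mapsto gx$ on a compact metrizable space $X$, topologically transitive; $X_t:=\{x\in X:\overline{Gx}=X\}$; $X_0$ carries the subspace topology and $X_0^2$ the product topology. $G$ acts diagonally on $X^2$. $\Delta_0:=\{(x,x):x\in X_0\}$. $\mathcal U_0$ is the family of sets $U\cap X_0^2$ with $U\subseteq X^2$ open, $G$-invariant, $\Delta_0\subseteq U$; $Q_0:=\bigcap_{U_0\in\mathcal U_0}\overline{U_0}\cap X_0^2$. For a continuous $G$-equivariant map $\pi:X_0\to Y$ into a compact metrizable system $(Y,G)$ that is equicontinuous and minimal (equivalently, a compact metrizable group on which $G$ acts minimally by translations), let $S^\pi_0:=\{(x,x')\in X_0^2:\pi(x)=\pi(x')\}$; $S^{eq}_0:=\bigcap_\pi S^\pi_0$, the intersection over all such $Y$ and $\pi$. $S^\ast_0$ is the smallest closed (in $X_0^2$), $G$-invariant equivalence relation on $X_0$ containing $Q_0$. *)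

theory Defs
  imports "HOL-Analysis.Analysis"
begin

text \<open>A group G (an arbitrary group, written additively via the type class group_add;
  group_add is not assumed commutative) acting on a set X of a metric space
  by homeomorphisms x \<mapsto> act g x.\<close>

definition homeo_action :: "('g::group_add \<Rightarrow> 'a::metric_space \<Rightarrow> 'a) \<Rightarrow> 'a set \<Rightarrow> bool" where
  "homeo_action act X \<longleftrightarrow>
     (\<forall>g. act g ` X \<subseteq> X \<and> continuous_on X (act g)) \<and>
     (\<forall>x\<in>X. act 0 x = x) \<and>
     (\<forall>g h. \<forall>x\<in>X. act (g + h) x = act g (act h x))"

definition orbit :: "('g \<Rightarrow> 'a \<Rightarrow> 'a) \<Rightarrow> 'a \<Rightarrow> 'a set" where
  "orbit act x = range (\<lambda>g. act g x)"

definition topologically_transitive :: "('g \<Rightarrow> 'a::metric_space \<Rightarrow> 'a) \<Rightarrow> 'a set \<Rightarrow> bool" where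
  "topologically_transitive act X \<longleftrightarrow>
     (\<forall>U V. openin (top_of_set X) U \<and> openin (top_of_set X) V \<and> U \<noteq> {} \<and> V \<noteq> {}
        \<longrightarrow> (\<exists>g. act g ` U \<inter> V \<noteq> {}))"

definition transitive_points :: "('g \<Rightarrow> 'a::metric_space \<Rightarrow> 'a) \<Rightarrow> 'a set \<Rightarrow> 'a set" where
  "transitive_points act X = {x \<in> X. closure (orbit act x) = X}"

definition invariant_set :: "('g \<Rightarrow> 'a \<Rightarrow> 'a) \<Rightarrow> 'a set \<Rightarrow> bool" where
  "invariant_set act A \<longleftrightarrow> (\<forall>g. act g ` A \<subseteq> A)"

definition diag_act :: "('g \<Rightarrow> 'a \<Rightarrow> 'a) \<Rightarrow> 'g \<Rightarrow> 'a \<times> 'a \<Rightarrow> 'a \<times> 'a" where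
  "diag_act act g p = (act g (fst p), act g (snd p))"

definition Delta0 :: "'a set \<Rightarrow> ('a \<times> 'a) set" where
  "Delta0 X0 = {(x, x) | x. x \<in> X0}"

definition U0_family :: "('g \<Rightarrow> 'a::metric_space \<Rightarrow> 'a) \<Rightarrow> 'a set \<Rightarrow> 'a set \<Rightarrow> ('a \<times> 'a) set set" where
  "U0_family act X X0 =
     {U \<inter> (X0 \<times> X0) | U. openin (top_of_set (X \<times> X)) U \<and> invariant_set (diag_act act) U
                          \<and> Delta0 X0 \<subseteq> U}"

definition Q0 :: "('g \<Rightarrow> 'a::metric_space \<Rightarrow> 'a) \<Rightarrow> 'a set \<Rightarrow> 'a set \<Rightarrow> ('a \<times> 'a) set" where
  "Q0 act X X0 = (\<Inter>U0 \<in> U0_family act X X0. closure U0) \<inter> (X0 \<times> X0)"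

definition equicontinuous_system :: "('g \<Rightarrow> 'b::metric_space \<Rightarrow> 'b) \<Rightarrow> 'b set \<Rightarrow> bool" where
  "equicontinuous_system actY Y \<longleftrightarrow>
     (\<forall>e>0. \<exists>d>0. \<forall>g. \<forall>y\<in>Y. \<forall>y'\<in>Y. dist y y' < d \<longrightarrow> dist (actY g y) (actY g y') < e)"

definition minimal_system :: "('g \<Rightarrow> 'b::metric_space \<Rightarrow> 'b) \<Rightarrow> 'b set \<Rightarrow> bool" where
  "minimal_system actY Y \<longleftrightarrow> Y \<noteq> {} \<and> (\<forall>y\<in>Y. closure (orbit actY y) = Y)"

definition eq_factor_map ::
  "('g::group_add \<Rightarrow> 'a::metric_space \<Rightarrow> 'a) \<Rightarrow> 'a set \<Rightarrow>
   ('g \<Rightarrow> 'b::metric_space \<Rightarrow> 'b) \<Rightarrow> 'b set \<Rightarrow> ('a \<Rightarrow> 'b) \<Rightarrow> bool" where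
  "eq_factor_map act X0 actY Y \<pi> \<longleftrightarrow>
     compact Y \<and> homeo_action actY Y \<and> equicontinuous_system actY Y \<and> minimal_system actY Y \<and>
     continuous_on X0 \<pi> \<and> \<pi> ` X0 \<subseteq> Y \<and> (\<forall>g. \<forall>x\<in>X0. \<pi> (act g x) = actY g (\<pi> x))"

definition S_pi :: "'a set \<Rightarrow> ('a \<Rightarrow> 'b) \<Rightarrow> ('a \<times> 'a) set" where
  "S_pi X0 \<pi> = {(x, x'). x \<in> X0 \<and> x' \<in> X0 \<and> \<pi> x = \<pi> x'}"

text \<open>S^eq_0, intersecting over all equicontinuous minimal factors Y living in the type 'b.
  Since 'b is arbitrary in the main theorem, this captures the intersection over all Y.\<close>
definition S_eq :: "('g::group_add \<Rightarrow> 'a::metric_space \<Rightarrow> 'a) \<Rightarrow> 'a set \<Rightarrow> 'b::metric_space itself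
                    \<Rightarrow> ('a \<times> 'a) set" where
  "S_eq act X0 _ = \<Inter>{S_pi X0 \<pi> | \<pi>. \<exists>(actY :: 'g \<Rightarrow> 'b \<Rightarrow> 'b) Y. eq_factor_map act X0 actY Y \<pi>}"

definition S_star :: "('g::group_add \<Rightarrow> 'a::metric_space \<Rightarrow> 'a) \<Rightarrow> 'a set \<Rightarrow> 'a set \<Rightarrow> ('a \<times> 'a) set" where
  "S_star act X X0 = \<Inter>{R. closedin (top_of_set (X0 \<times> X0)) R \<and> invariant_set (diag_act act) R
                           \<and> equiv X0 R \<and> Q0 act X X0 \<subseteq> R}"

end

theory Submission imports Defs begin

lemma contf:
  assumes "continuous_on X0 \<pi>"
  shows "continuous_on (X0 \<times> X0) (\<lambda>p. dist (\<pi> (fst p)) (\<pi> (snd p)))"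
proof -
  have "continuous_on (X0 \<times> X0) (\<lambda>p. \<pi> (fst p))"
    by (rule continuous_on_compose2[OF assms continuous_on_fst]) (auto intro: continuous_on_id)
  moreover have "continuous_on (X0 \<times> X0) (\<lambda>p. \<pi> (snd p))"
    by (rule continuous_on_compose2[OF assms continuous_on_snd]) (auto intro: continuous_on_id)
  ultimately show ?thesis by (intro continuous_intros)
qed

lemma contdiag:
  assumes "homeo_action act X"
  shows "continuous_on (X \<times> X) (diag_act act g)"
proof -
  have c: "continuous_on X (act g)" using assms unfolding homeo_action_def by auto
  have "continuous_on (X \<times> X) (\<lambda>p. act g (fst p))"
    by (rule continuous_on_compose2[OF c continuous_on_fst]) (auto intro: continuous_on_id)
  moreover have "continuous_on (X \<times> X) (\<lambda>p. act g (snd p))"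
    by (rule continuous_on_compose2[OF c continuous_on_snd]) (auto intro: continuous_on_id)
  ultimately show ?thesis unfolding diag_act_def by (intro continuous_intros)
qed

lemma Q0_sub_Spi:
  assumes hom: "homeo_action act X" and sub: "X0 \<subseteq> X" and inv: "invariant_set act X0"
    and ef: "eq_factor_map act X0 actY Y \<pi>"
  shows "Q0 act X X0 \<subseteq> S_pi X0 \<pi>"
proof
  fix p assume pQ: "p \<in> Q0 act X X0"
  obtain x x' where p: "p = (x, x')" by (cases p)
  have xX0: "x \<in> X0" "x' \<in> X0" using pQ p unfolding Q0_def by auto
  have clos: "\<And>V. V \<in> U0_family act X X0 \<Longrightarrow> (x, x') \<in> closure V" using pQ p unfolding Q0_def by auto
  have homY: "homeo_action actY Y" and eqY: "equicontinuous_system actY Y"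
    and cpi: "continuous_on X0 \<pi>" and piY: "\<pi> ` X0 \<subseteq> Y"
    and equiv: "\<And>g x. x \<in> X0 \<Longrightarrow> \<pi> (act g x) = actY g (\<pi> x)"
    using ef unfolding eq_factor_map_def by auto
  define f where "f = (\<lambda>p. dist (\<pi> (fst p)) (\<pi> (snd p)))"
  have cf: "continuous_on (X0 \<times> X0) f" unfolding f_def by (rule contf[OF cpi])
  have "\<pi> x = \<pi> x'"
  proof (rule ccontr)
    assume ne: "\<pi> x \<noteq> \<pi> x'"
    define e where "e = f (x, x') / 2"
    have epos: "e > 0" using ne unfolding e_def f_def by simp
    obtain d where dpos: "d > 0" and dprop: "\<And>g y y'. y \<in> Y \<Longrightarrow> y' \<in> Y \<Longrightarrow> dist y y' < d \<Longrightarrow> dist (actY g y) (actY g y') < e"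
      using eqY epos unfolding equicontinuous_system_def by meson
    have "openin (top_of_set (X0 \<times> X0)) ((X0 \<times> X0) \<inter> f -` {..<d})"
      by (rule continuous_openin_preimage_gen[OF cf]) auto
    then obtain T where Topen: "open T" and Teq: "(X0 \<times> X0) \<inter> f -` {..<d} = T \<inter> (X0 \<times> X0)"
      unfolding openin_open by auto
    define U where "U = {q \<in> X \<times> X. \<exists>g. diag_act act g q \<in> T}"
    have Uun: "U = (\<Union>g. (X \<times> X) \<inter> diag_act act g -` T)" unfolding U_def by blast
    have Uopen: "openin (top_of_set (X \<times> X)) U"
      unfolding Uun by (intro openin_Union) (auto intro!: continuous_openin_preimage_gen[OF contdiag[OF hom] Topen])
    have actX: "\<And>g z. z \<in> X \<Longrightarrow> act g z \<in> X" using hom unfolding homeo_action_def by auto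
    have actadd: "\<And>g h z. z \<in> X \<Longrightarrow> act (g + h) z = act g (act h z)" using hom unfolding homeo_action_def by auto
    have Uinv: "invariant_set (diag_act act) U"
      unfolding invariant_set_def
    proof (intro allI subsetI)
      fix h q assume "q \<in> diag_act act h ` U"
      then obtain r g where r: "r \<in> X \<times> X" "diag_act act g r \<in> T" and q: "q = diag_act act h r"
        unfolding U_def by auto
      have e1: "diag_act act (g + - h) q = diag_act act g r"
        using r(1) q unfolding diag_act_def
        by (auto simp: actadd[symmetric] add.assoc mem_Times_iff)
      have "q \<in> X \<times> X" using r(1) q actX unfolding diag_act_def by (auto simp: mem_Times_iff)
      moreover have "diag_act act (g + - h) q \<in> T" using e1 r(2) by simp
      ultimately show "q \<in> U" unfolding U_def by blast
    qed
    have act0: "\<And>z. z \<in> X \<Longrightarrow> act 0 z = z" using hom unfolding homeo_action_def by auto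
    have Dsub: "Delta0 X0 \<subseteq> U"
    proof
      fix q assume "q \<in> Delta0 X0"
      then obtain a where a: "a \<in> X0" "q = (a, a)" unfolding Delta0_def by auto
      have "(a, a) \<in> (X0 \<times> X0) \<inter> f -` {..<d}" using a dpos unfolding f_def by auto
      then have "(a, a) \<in> T" using Teq by auto
      then show "q \<in> U" using a sub act0 unfolding U_def diag_act_def
        by (auto intro!: exI[of _ 0])
    qed
    have fam: "U \<inter> (X0 \<times> X0) \<in> U0_family act X X0"
      unfolding U0_family_def using Uopen Uinv Dsub by (intro CollectI exI[of _ U]) simp
    have actY_inv: "\<And>g y. y \<in> Y \<Longrightarrow> actY (- g) (actY g y) = y"
    proof -
      fix g y assume y: "y \<in> Y"
      have "actY (- g + g) y = actY (- g) (actY g y)" using homY y unfolding homeo_action_def by blast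
      moreover have "actY 0 y = y" using homY y unfolding homeo_action_def by blast
      ultimately show "actY (- g) (actY g y) = y" by simp
    qed
    have actYY: "\<And>g y. y \<in> Y \<Longrightarrow> actY g y \<in> Y" using homY unfolding homeo_action_def by auto
    have inX0: "\<And>g z. z \<in> X0 \<Longrightarrow> act g z \<in> X0" using inv unfolding invariant_set_def by auto
    have small: "U \<inter> (X0 \<times> X0) \<subseteq> (X0 \<times> X0) \<inter> f -` {..e}"
    proof
      fix q assume q: "q \<in> U \<inter> (X0 \<times> X0)"
      then have qU: "q \<in> U" and qX0: "q \<in> X0 \<times> X0" by auto
      from qU obtain g where gT: "diag_act act g q \<in> T" unfolding U_def by blast
      obtain a b where ab0: "q = (a, b)" by (cases q)
      have ab: "q = (a, b)" "a \<in> X0" "b \<in> X0" using ab0 qX0 by auto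
      have "diag_act act g (a, b) \<in> X0 \<times> X0" using ab inX0 unfolding diag_act_def by auto
      then have "diag_act act g (a, b) \<in> T \<inter> (X0 \<times> X0)" using gT ab by simp
      then have "diag_act act g (a, b) \<in> (X0 \<times> X0) \<inter> f -` {..<d}" unfolding Teq .
      then have "f (diag_act act g (a, b)) < d" by simp
      then have "dist (actY g (\<pi> a)) (actY g (\<pi> b)) < d"
        using ab equiv unfolding f_def diag_act_def by simp
      then have "dist (actY (-g) (actY g (\<pi> a))) (actY (-g) (actY g (\<pi> b))) < e"
        using dprop[OF actYY actYY] piY ab by blast
      moreover have "\<pi> a \<in> Y" "\<pi> b \<in> Y" using piY ab by auto
      ultimately have "f (a, b) < e" unfolding f_def by (simp add: actY_inv)
      then show "q \<in> (X0 \<times> X0) \<inter> f -` {..e}" using ab by auto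
    qed
    have "closedin (top_of_set (X0 \<times> X0)) ((X0 \<times> X0) \<inter> f -` {..e})"
      by (rule continuous_closedin_preimage[OF cf]) auto
    then obtain C where Cc: "closed C" and Ceq: "(X0 \<times> X0) \<inter> f -` {..e} = C \<inter> (X0 \<times> X0)"
      unfolding closedin_closed by auto
    have "closure (U \<inter> (X0 \<times> X0)) \<subseteq> C"
      using small Ceq Cc by (intro closure_minimal) auto
    then have "(x, x') \<in> C" using clos[OF fam] by auto
    then have "f (x, x') \<le> e" using Ceq xX0 by auto
    then show False using epos unfolding e_def by simp
  qed
  then show "p \<in> S_pi X0 \<pi>" using p xX0 unfolding S_pi_def by auto
qed

lemma Spi_closed:
  fixes \<pi> :: "'a::metric_space \<Rightarrow> 'b::metric_space"
  assumes "continuous_on X0 \<pi>"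
  shows "closedin (top_of_set (X0 \<times> X0)) (S_pi X0 \<pi>)"
proof -
  have "closedin (top_of_set (X0 \<times> X0)) ((X0 \<times> X0) \<inter> (\<lambda>p. dist (\<pi> (fst p)) (\<pi> (snd p))) -` {0})"
    by (rule continuous_closedin_preimage[OF contf[OF assms]]) auto
  moreover have "(X0 \<times> X0) \<inter> (\<lambda>p. dist (\<pi> (fst p)) (\<pi> (snd p))) -` {0} = S_pi X0 \<pi>"
    unfolding S_pi_def by auto
  ultimately show ?thesis by simp
qed

theorem mainTheorem4:
  fixes act :: "'g::group_add \<Rightarrow> 'a::metric_space \<Rightarrow> 'a"
    and X X0 :: "'a set"
  assumes "compact X"
    and "homeo_action act X"
    and "topologically_transitive act X"
    and "X0 \<subseteq> transitive_points act X"
    and "closure X0 = X"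
    and "invariant_set act X0"
  shows "Q0 act X X0 \<subseteq> S_eq act X0 TYPE('b::metric_space)
       \<and> S_star act X X0 \<subseteq> S_eq act X0 TYPE('b::metric_space)"
proof -
  have sub: "X0 \<subseteq> X" using assms(4) unfolding transitive_points_def by auto
  define F where "F = {S_pi X0 \<pi> | \<pi>. \<exists>(actY :: 'g \<Rightarrow> 'b \<Rightarrow> 'b) Y. eq_factor_map act X0 actY Y \<pi>}"
  have Seq: "S_eq act X0 TYPE('b) = \<Inter>F" unfolding S_eq_def F_def by simp
  have FS: "\<And>S. S \<in> F \<Longrightarrow> \<exists>(actY :: 'g \<Rightarrow> 'b \<Rightarrow> 'b) Y \<pi>. eq_factor_map act X0 actY Y \<pi> \<and> S = S_pi X0 \<pi>"
    unfolding F_def by blast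
  have P1: "Q0 act X X0 \<subseteq> S_eq act X0 TYPE('b)"
    unfolding Seq
  proof (rule Inter_greatest)
    fix S assume "S \<in> F"
    then obtain actY :: "'g \<Rightarrow> 'b \<Rightarrow> 'b" and Y \<pi> where "eq_factor_map act X0 actY Y \<pi>" "S = S_pi X0 \<pi>"
      using FS by blast
    then show "Q0 act X X0 \<subseteq> S" using Q0_sub_Spi[OF assms(2) sub assms(6)] by blast
  qed
  define R where "R = \<Inter>(insert (X0 \<times> X0) F)"
  have RS: "R \<subseteq> S_eq act X0 TYPE('b)" unfolding R_def Seq by auto
  have inX0: "\<And>g z. z \<in> X0 \<Longrightarrow> act g z \<in> X0" using assms(6) unfolding invariant_set_def by auto
  have Rclosed: "closedin (top_of_set (X0 \<times> X0)) R"
    unfolding R_def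
  proof (rule closedin_Inter)
    fix S assume "S \<in> insert (X0 \<times> X0) F"
    then show "closedin (top_of_set (X0 \<times> X0)) S"
    proof
      assume "S = X0 \<times> X0" then show ?thesis by simp
    next
      assume "S \<in> F"
      then obtain actY :: "'g \<Rightarrow> 'b \<Rightarrow> 'b" and Y \<pi> where "eq_factor_map act X0 actY Y \<pi>" "S = S_pi X0 \<pi>"
        using FS by blast
      then show ?thesis using Spi_closed unfolding eq_factor_map_def by blast
    qed
  qed auto
  have Rinv: "invariant_set (diag_act act) R"
    unfolding invariant_set_def
  proof (intro allI subsetI)
    fix g q assume "q \<in> diag_act act g ` R"
    then obtain a b where ab: "(a, b) \<in> R" "q = (act g a, act g b)"
      unfolding diag_act_def by auto
    show "q \<in> R" unfolding R_def
    proof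
      fix S assume "S \<in> insert (X0 \<times> X0) F"
      then show "q \<in> S"
      proof
        assume "S = X0 \<times> X0" then show ?thesis using ab inX0 unfolding R_def by auto
      next
        assume SF: "S \<in> F"
        then obtain actY :: "'g \<Rightarrow> 'b \<Rightarrow> 'b" and Y \<pi> where ef: "eq_factor_map act X0 actY Y \<pi>" and Seq: "S = S_pi X0 \<pi>"
          using FS by blast
        have "(a, b) \<in> S" using ab(1) SF unfolding R_def by auto
        then have "a \<in> X0" "b \<in> X0" "\<pi> a = \<pi> b" unfolding Seq S_pi_def by auto
        moreover have "\<And>x. x \<in> X0 \<Longrightarrow> \<pi> (act g x) = actY g (\<pi> x)" using ef unfolding eq_factor_map_def by auto
        ultimately show ?thesis unfolding Seq S_pi_def using ab(2) inX0 by auto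
      qed
    qed
  qed
  have Requiv: "equiv X0 R"
  proof (rule equivI)
    show "refl_on X0 R" unfolding refl_on_def R_def
      by (auto dest!: FS simp: S_pi_def)
    show "sym R" unfolding sym_def
    proof (intro allI impI)
      fix x y assume xy: "(x, y) \<in> R"
      show "(y, x) \<in> R" unfolding R_def
      proof
        fix S assume SI: "S \<in> insert (X0 \<times> X0) F"
        then have "(x, y) \<in> S" using xy unfolding R_def by blast
        with SI show "(y, x) \<in> S" by (auto dest!: FS simp: S_pi_def)
      qed
    qed
    show "trans R" unfolding trans_def
    proof (intro allI impI)
      fix x y z assume xy: "(x, y) \<in> R" and yz: "(y, z) \<in> R"
      show "(x, z) \<in> R" unfolding R_def
      proof
        fix S assume SI: "S \<in> insert (X0 \<times> X0) F"
        then have "(x, y) \<in> S" "(y, z) \<in> S" using xy yz unfolding R_def by blast+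
        with SI show "(x, z) \<in> S" by (auto dest!: FS simp: S_pi_def)
      qed
    qed
    show "R \<subseteq> X0 \<times> X0" unfolding R_def by auto
  qed
  have RQ: "Q0 act X X0 \<subseteq> R"
  proof -
    have "Q0 act X X0 \<subseteq> X0 \<times> X0" unfolding Q0_def by auto
    then show ?thesis using P1 unfolding R_def Seq by auto
  qed
  have "S_star act X X0 \<subseteq> R"
    unfolding S_star_def using Rclosed Rinv Requiv RQ by (intro Inter_lower) simp
  then show ?thesis using P1 RS by auto
qed

end
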